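(* Let $d\ge 0$ be an integer, let $G$ be any finite $d$-regular graph and let $\lambda>0$. Then \[ \alpha_G(\lambda) \le \alpha_{K_{d+1}}(\lambda), \] with equality if and only if $G$ is a disjoint union of copies of $K_{d+1}$.
   Context: Graphs are finite, simple and have at least one vertex. A Widom--Rowlinson configuration on a graph $G$ is a map $\chi:V(G)\to\{0,1,2\}$ such that no vertex coloured $1$ is adjacent to a vertex coloured $2$. Let $\Omega(G)$ be the set of such configurations and $X_i(\chi)$ the number of vertices coloured $i$. The Widom--Rowlinson model on $G$ with activity $\lambda>0$ is the probability distribution on $\Omega(G)$ given by $\mathbb{P}[\chi]=\lambda^{X_1(\chi)+X_2(\chi)}/P_G(\lambda)$, where $P_G(\lambda)=\sum_{\chi\in\Omega(G)}\lambda^{X_1(\chi)+X_2(\chi)}$ is the partition function. The occupancy fraction is $\alpha_G(\lambda)=\mathbb{E}[X_1+X_2]/|V(G)|$, the expectation being over $\chi$ drawn from this model. $K_{d+1}$ denotes the complete graph on $d+1$ vertices. *)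

theory Defs
  imports "HOL-Analysis.Analysis" "HOL-Library.Disjoint_Sets"
begin

definition simple_graph :: "'a set \<Rightarrow> ('a \<Rightarrow> 'a \<Rightarrow> bool) \<Rightarrow> bool" where
  "simple_graph V E \<longleftrightarrow> finite V \<and> V \<noteq> {} \<and>
     (\<forall>u v. E u v \<longrightarrow> u \<in> V \<and> v \<in> V) \<and>
     (\<forall>u v. E u v \<longrightarrow> E v u) \<and> (\<forall>v. \<not> E v v)"

definition regular :: "'a set \<Rightarrow> ('a \<Rightarrow> 'a \<Rightarrow> bool) \<Rightarrow> nat \<Rightarrow> bool" where
  "regular V E d \<longleftrightarrow> (\<forall>v\<in>V. card {u\<in>V. E v u} = d)"

definition WR_configs :: "'a set \<Rightarrow> ('a \<Rightarrow> 'a \<Rightarrow> bool) \<Rightarrow> ('a \<Rightarrow> nat) set" where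
  "WR_configs V E = {c. c \<in> (V \<rightarrow>\<^sub>E {0,1,2}) \<and>
     (\<forall>u\<in>V. \<forall>v\<in>V. E u v \<longrightarrow> \<not> (c u = 1 \<and> c v = 2))}"

definition colour_count :: "'a set \<Rightarrow> ('a \<Rightarrow> nat) \<Rightarrow> nat \<Rightarrow> nat" where
  "colour_count V c i = card {v\<in>V. c v = i}"

definition occupied :: "'a set \<Rightarrow> ('a \<Rightarrow> nat) \<Rightarrow> nat" where
  "occupied V c = colour_count V c 1 + colour_count V c 2"

definition WR_partition :: "'a set \<Rightarrow> ('a \<Rightarrow> 'a \<Rightarrow> bool) \<Rightarrow> real \<Rightarrow> real" where
  "WR_partition V E lam = (\<Sum>c\<in>WR_configs V E. lam ^ occupied V c)"

definition WR_occupancy :: "'a set \<Rightarrow> ('a \<Rightarrow> 'a \<Rightarrow> bool) \<Rightarrow> real \<Rightarrow> real" where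
  "WR_occupancy V E lam =
     (\<Sum>c\<in>WR_configs V E. real (occupied V c) * lam ^ occupied V c / WR_partition V E lam)
     / real (card V)"

definition K_verts :: "nat \<Rightarrow> nat set" where
  "K_verts d = {..d}"

definition K_edges :: "nat \<Rightarrow> nat \<Rightarrow> nat \<Rightarrow> bool" where
  "K_edges d i j \<longleftrightarrow> i \<le> d \<and> j \<le> d \<and> i \<noteq> j"

definition disjoint_union_of_cliques :: "'a set \<Rightarrow> ('a \<Rightarrow> 'a \<Rightarrow> bool) \<Rightarrow> nat \<Rightarrow> bool" where
  "disjoint_union_of_cliques V E d \<longleftrightarrow>
     (\<exists>P. partition_on V P \<and> (\<forall>B\<in>P. card B = d + 1) \<and>
       (\<forall>u\<in>V. \<forall>v\<in>V. E u v \<longleftrightarrow> (u \<noteq> v \<and> (\<exists>B\<in>P. u \<in> B \<and> v \<in> B))))"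

end

theory Submission
  imports Defs
begin

lemma pow_sum0:
  fixes l :: real
  assumes "finite R"
  shows "(\<Sum>T\<in>Pow R. l ^ card T) = (1 + l) ^ card R"
  using assms
proof (induction R rule: finite_induct)
  case empty then show ?case by simp
next
  case (insert a F)
  have disj: "Pow F \<inter> insert a ` Pow F = {}" using insert by auto
  have inj: "inj_on (insert a) (Pow F)" using insert by (auto simp: inj_on_def)
  have "(\<Sum>T\<in>Pow (insert a F). l ^ card T) = (\<Sum>T\<in>Pow F. l ^ card T) + (\<Sum>T\<in>insert a ` Pow F. l ^ card T)"
    by (simp add: Pow_insert sum.union_disjoint disj insert)
  also have "(\<Sum>T\<in>insert a ` Pow F. l ^ card T) = (\<Sum>T\<in>Pow F. l ^ card (insert a T))"
    by (simp add: sum.reindex inj)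
  also have "\<dots> = (\<Sum>T\<in>Pow F. l * l ^ card T)"
  proof (intro sum.cong refl)
    fix T assume "T \<in> Pow F"
    hence "a \<notin> T" "finite T" using insert finite_subset by auto
    then show "l ^ card (insert a T) = l * l ^ card T" by simp
  qed
  finally show ?case using insert by (simp add: sum_distrib_left[symmetric] algebra_simps)
qed

lemma pow_sum1:
  fixes l :: real
  assumes "finite R"
  shows "(1 + l) * (\<Sum>T\<in>Pow R. l ^ card T * card T) = card R * l * (1 + l) ^ card R"
  using assms
proof (induction R rule: finite_induct)
  case empty then show ?case by simp
next
  case (insert a F)
  have disj: "Pow F \<inter> insert a ` Pow F = {}" using insert by auto
  have inj: "inj_on (insert a) (Pow F)" using insert by (auto simp: inj_on_def)
  have "(\<Sum>T\<in>Pow (insert a F). l ^ card T * card T) = (\<Sum>T\<in>Pow F. l ^ card T * card T) + (\<Sum>T\<in>insert a ` Pow F. l ^ card T * card T)"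
    by (simp add: Pow_insert sum.union_disjoint disj insert)
  also have "(\<Sum>T\<in>insert a ` Pow F. l ^ card T * card T) = (\<Sum>T\<in>Pow F. l ^ card (insert a T) * card (insert a T))"
    by (simp add: sum.reindex inj)
  also have "\<dots> = (\<Sum>T\<in>Pow F. l * (l ^ card T * card T) + l * l ^ card T)"
  proof (intro sum.cong refl)
    fix T assume "T \<in> Pow F"
    hence "a \<notin> T" "finite T" using insert finite_subset by auto
    then show "l ^ card (insert a T) * card (insert a T) = l * (l ^ card T * card T) + l * l ^ card T"
      by (simp add: algebra_simps)
  qed
  also have "\<dots> = l * (\<Sum>T\<in>Pow F. l ^ card T * card T) + l * (1+l) ^ card F"
    by (simp add: sum.distrib sum_distrib_left[symmetric] pow_sum0 insert)
  finally have e: "(\<Sum>T\<in>Pow (insert a F). l ^ card T * card T) = (1 + l) * (\<Sum>T\<in>Pow F. l ^ card T * card T) + l * (1+l) ^ card F"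
    by (simp add: algebra_simps)
  define X where "X = (\<Sum>T\<in>Pow F. l ^ card T * card T)"
  define P where "P = (1 + l) ^ card F"
  have IH: "(1 + l) * X = card F * l * P" using insert by (simp add: X_def P_def)
  have "(1 + l) * (\<Sum>T\<in>Pow (insert a F). l ^ card T * card T) = (1 + l) * ((1 + l) * X + l * P)"
    using e by (simp add: X_def P_def)
  also have "\<dots> = (1 + l) * ((1 + l) * X) + (1 + l) * l * P" by (simp add: algebra_simps)
  also have "\<dots> = (1 + l) * (card F * l * P) + (1 + l) * l * P" by (simp only: IH)
  also have "\<dots> = (card F + 1) * l * ((1 + l) * P)" by (simp add: algebra_simps)
  finally show ?case using insert by (simp add: P_def)
qed

lemma pow_le_aux:
  fixes x :: real assumes "x \<ge> 1"
  shows "x ^ m - 1 \<le> m * (x - 1) * x ^ m"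
proof (induction m)
  case 0 then show ?case by simp
next
  case (Suc m)
  have "x ^ Suc m - 1 = x * (x ^ m - 1) + (x - 1)" by (simp add: algebra_simps)
  also have "\<dots> \<le> x * (m * (x - 1) * x ^ m) + (x - 1) * x ^ Suc m"
  proof -
    have "x * (x ^ m - 1) \<le> x * (m * (x - 1) * x ^ m)" using Suc assms by (intro mult_left_mono) auto
    moreover have "x - 1 \<le> (x - 1) * x ^ Suc m"
      using mult_left_mono[of 1 "x^Suc m" "x-1"] one_le_power[OF assms, of "Suc m"] assms by simp
    ultimately show ?thesis by linarith
  qed
  also have "\<dots> = Suc m * (x - 1) * x ^ Suc m" by (simp add: algebra_simps)
  finally show ?case .
qed

lemma g_nonneg:
  fixes x :: real assumes "x \<ge> 1" "r \<le> d"
  shows "r * (x ^ d - 1) * x ^ r \<le> d * x ^ d * (x ^ r - 1)"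
proof -
  obtain m where dm: "d = r + m" using assms le_Suc_ex by blast
  define y where "y = x ^ r"
  define z where "z = x ^ m"
  have y1: "y \<ge> 1" "z \<ge> 1" using assms by (auto simp: y_def z_def one_le_power)
  have b: "r * (x - 1) \<le> y - 1"
    using Bernoulli_inequality[of "x - 1" r] assms by (simp add: y_def)
  have a: "z - 1 \<le> m * (x - 1) * z" using pow_le_aux[OF assms(1)] by (simp add: z_def)
  have "r * (z - 1) \<le> r * (m * (x - 1) * z)" using a by (intro mult_left_mono) auto
  also have "\<dots> = m * z * (r * (x - 1))" by (simp add: algebra_simps)
  also have "\<dots> \<le> m * z * (y - 1)" using b y1 by (intro mult_left_mono) auto
  finally have key: "r * (z - 1) \<le> m * z * (y - 1)" .
  have xd: "x ^ d = y * z" by (simp add: dm power_add y_def z_def)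
  have "d * x ^ d * (x ^ r - 1) - r * (x ^ d - 1) * x ^ r = (r+m) * (y*z) * (y - 1) - r * (y*z - 1) * y"
    by (simp only: xd flip: y_def) (simp add: dm)
  also have "\<dots> = y * (m * z * (y - 1) - r * (z - 1))" by (simp add: algebra_simps)
  also have "\<dots> \<ge> 0" using key y1 by simp
  finally show ?thesis by simp
qed



lemma inner_sum:
  fixes l :: real and d :: nat
  assumes l: "l > 0" and fin: "finite R" and rd: "card R \<le> d"
  shows "(\<Sum>T\<in>Pow R - {{}}. l ^ card T * (l * (1+l)^d - (((1+l)^d - 1) / d) * card T
            - (if b then 0 else l * (((1+l)^d - 1) / d) * card T)))
       = l * ((1+l)^d * ((1+l) ^ card R - 1) - (((1+l)^d - 1) / d) * card R * (1+l)^card R)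
         + (if b then l * (((1+l)^d - 1) / d) * (\<Sum>T\<in>Pow R. l ^ card T * card T) else 0)"
proof -
  define c where "c = (1+l)^d"
  define e where "e = (c - 1) / d"
  define P1 where "P1 = (\<Sum>T\<in>Pow R. l ^ card T * card T)"
  have p0: "(\<Sum>T\<in>Pow R. l ^ card T) = (1+l)^card R" by (rule pow_sum0[OF fin])
  have p1: "(1+l) * P1 = card R * l * (1+l)^card R" unfolding P1_def by (rule pow_sum1[OF fin])
  have fP: "finite (Pow R)" using fin by simp
  define f where "f = (\<lambda>T::'a set. l ^ card T * (l * c - e * card T - (if b then 0 else l * e * card T)))"
  have A: "(\<Sum>T\<in>Pow R - {{}}. f T) = (\<Sum>T\<in>Pow R. f T) - f {}"
    using fP by (simp add: sum_diff1)
  have Bq: "(\<Sum>T\<in>Pow R. f T) = l * c * (\<Sum>T\<in>Pow R. l ^ card T) - (e + (if b then 0 else l * e)) * P1"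
    by (simp add: f_def P1_def sum_subtractf sum_distrib_left algebra_simps sum.distrib)
  have C: "f {} = l * c" by (simp add: f_def)
  have s0: "(\<Sum>T\<in>Pow R - {{}}. f T) = l * c * ((1+l)^card R - 1) - (e + (if b then 0 else l * e)) * P1"
    unfolding A Bq C p0 by (simp add: algebra_simps)
  have s: "(\<Sum>T\<in>Pow R - {{}}. l ^ card T * (l * c - e * card T - (if b then 0 else l * e * card T))) = l * c * ((1+l)^card R - 1) - (e + (if b then 0 else l * e)) * P1"
    using s0 by (simp add: f_def)
  show ?thesis
  proof (cases b)
    case True
    have "l * c * ((1+l)^card R - 1) - e * P1 = l * (c * ((1+l)^card R - 1) - e * card R * (1+l)^card R) + l * e * P1"
    proof -
      have q: "l * (e * card R * (1+l)^card R) = e * ((1+l) * P1)" using p1 by simp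
      show ?thesis using q by (simp add: algebra_simps)
    qed
    then show ?thesis using s True by (simp add: c_def e_def P1_def)
  next
    case False
    have "l * c * ((1+l)^card R - 1) - (e + l * e) * P1 = l * (c * ((1+l)^card R - 1) - e * card R * (1+l)^card R)"
    proof -
      have q: "l * (e * card R * (1+l)^card R) = e * ((1+l) * P1)" using p1 by simp
      show ?thesis using q by (simp add: algebra_simps)
    qed
    then show ?thesis using s False by (simp add: c_def e_def P1_def)
  qed
qed

lemma g_term_nonneg:
  fixes l :: real and d r :: nat
  assumes l: "l \<ge> 0" and rd: "r \<le> d"
  shows "(1+l)^d * ((1+l) ^ r - 1) - (((1+l)^d - 1) / d) * r * (1+l)^r \<ge> 0"
proof (cases "d = 0")
  case True then show ?thesis using rd by simp
next
  case False
  have "r * ((1+l)^d - 1) * (1+l)^r \<le> d * (1+l)^d * ((1+l)^r - 1)"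
    using g_nonneg[of "1+l" r d] l rd by simp
  then have "(((1+l)^d - 1) / d) * r * (1+l)^r \<le> (1+l)^d * ((1+l) ^ r - 1)"
    using False by (simp add: field_simps)
  then show ?thesis by simp
qed

lemma g_term_zero:
  fixes l :: real and d :: nat
  shows "(1+l)^d * ((1+l) ^ d - 1) - (((1+l)^d - 1) / d) * d * (1+l)^d = 0"
  by (cases "d = 0") simp_all

lemma P1_pos:
  fixes l :: real
  assumes "l > 0" "finite R" "R \<noteq> {}"
  shows "(\<Sum>T\<in>Pow R. l ^ card T * card T) > 0"
proof -
  have "(1+l) * (\<Sum>T\<in>Pow R. l ^ card T * card T) = card R * l * (1+l)^card R" by (rule pow_sum1[OF assms(2)])
  moreover have "card R > 0" using assms by (simp add: card_gt_0_iff)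
  ultimately have "(1+l) * (\<Sum>T\<in>Pow R. l ^ card T * card T) > 0" using assms by simp
  then show ?thesis using assms by (simp add: zero_less_mult_iff)
qed

lemma P1_nonneg:
  fixes l :: real
  assumes "l \<ge> 0"
  shows "(\<Sum>T\<in>Pow R. l ^ card T * card T) \<ge> 0"
  using assms by (intro sum_nonneg) simp



locale wrg =
  fixes V :: "'a set" and E :: "'a \<Rightarrow> 'a \<Rightarrow> bool" and d :: nat and lam :: real
  assumes sg: "simple_graph V E" and reg: "regular V E d" and lam: "lam > 0"
begin

lemma finV: "finite V" using sg by (simp add: simple_graph_def)
lemma Vne: "V \<noteq> {}" using sg by (simp add: simple_graph_def)
lemma edgeV: "E u w \<Longrightarrow> u \<in> V \<and> w \<in> V" using sg by (simp add: simple_graph_def)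
lemma symE: "E u w \<Longrightarrow> E w u" using sg by (simp add: simple_graph_def)
lemma irr: "\<not> E u u" using sg by (simp add: simple_graph_def)

definition N where "N v = {u\<in>V. E v u}"
lemma N_sub: "N v \<subseteq> V" by (auto simp: N_def)
lemma finN: "finite (N v)" using finV N_sub finite_subset by blast
lemma card_N: "v \<in> V \<Longrightarrow> card (N v) = d" using reg by (simp add: regular_def N_def)
lemma v_notin_N: "v \<notin> N v" using irr by (simp add: N_def)

abbreviation W where "W \<equiv> WR_configs V E"

lemma W_iff: "\<sigma> \<in> W \<longleftrightarrow> \<sigma> \<in> extensional V \<and> (\<forall>u\<in>V. \<sigma> u \<le> 2) \<and>
   (\<forall>u w. E u w \<longrightarrow> \<sigma> u = 0 \<or> \<sigma> w = 0 \<or> \<sigma> u = \<sigma> w)"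
proof
  assume a: "\<sigma> \<in> W"
  then have ext: "\<sigma> \<in> extensional V" and vals: "\<forall>u\<in>V. \<sigma> u \<in> {0,1,2}"
    and ok: "\<forall>u\<in>V. \<forall>w\<in>V. E u w \<longrightarrow> \<not> (\<sigma> u = 1 \<and> \<sigma> w = 2)"
    by (auto simp: WR_configs_def PiE_iff)
  have "\<forall>u w. E u w \<longrightarrow> \<sigma> u = 0 \<or> \<sigma> w = 0 \<or> \<sigma> u = \<sigma> w"
  proof (intro allI impI)
    fix u w assume e: "E u w"
    then have uv: "u \<in> V" "w \<in> V" using edgeV by auto
    have "\<not> (\<sigma> u = 1 \<and> \<sigma> w = 2)" using ok e uv by auto
    moreover have "\<not> (\<sigma> w = 1 \<and> \<sigma> u = 2)" using ok symE[OF e] uv by auto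
    moreover have "\<sigma> u \<in> {0,1,2}" "\<sigma> w \<in> {0,1,2}" using vals uv by auto
    ultimately show "\<sigma> u = 0 \<or> \<sigma> w = 0 \<or> \<sigma> u = \<sigma> w" by auto
  qed
  then show "\<sigma> \<in> extensional V \<and> (\<forall>u\<in>V. \<sigma> u \<le> 2) \<and>
   (\<forall>u w. E u w \<longrightarrow> \<sigma> u = 0 \<or> \<sigma> w = 0 \<or> \<sigma> u = \<sigma> w)" using ext vals by auto
next
  assume "\<sigma> \<in> extensional V \<and> (\<forall>u\<in>V. \<sigma> u \<le> 2) \<and>
   (\<forall>u w. E u w \<longrightarrow> \<sigma> u = 0 \<or> \<sigma> w = 0 \<or> \<sigma> u = \<sigma> w)"
  then have a: "\<sigma> \<in> extensional V" "\<forall>u\<in>V. \<sigma> u \<le> 2" "\<And>u w. E u w \<Longrightarrow> \<sigma> u = 0 \<or> \<sigma> w = 0 \<or> \<sigma> u = \<sigma> w"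
    by auto
  have "\<forall>u\<in>V. \<forall>w\<in>V. E u w \<longrightarrow> \<not> (\<sigma> u = 1 \<and> \<sigma> w = 2)"
  proof (intro ballI impI)
    fix u w assume "u \<in> V" "w \<in> V" "E u w"
    then show "\<not> (\<sigma> u = 1 \<and> \<sigma> w = 2)" using a(3)[of u w] by auto
  qed
  moreover have "\<sigma> \<in> V \<rightarrow>\<^sub>E {0,1,2}"
  proof -
    have "\<forall>u\<in>V. \<sigma> u \<in> {0,1,2}" using a(2) by force
    then show ?thesis using a(1) by (auto simp: PiE_iff)
  qed
  ultimately show "\<sigma> \<in> W" by (simp add: WR_configs_def)
qed

lemma finite_W: "finite W"
proof -
  have "W \<subseteq> V \<rightarrow>\<^sub>E {0,1,2}" by (auto simp: WR_configs_def)
  moreover have "finite (V \<rightarrow>\<^sub>E ({0,1,2}::nat set))" using finV by (simp add: finite_PiE)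
  ultimately show ?thesis using finite_subset by blast
qed

definition occ :: "('a \<Rightarrow> nat) \<Rightarrow> nat" where "occ \<sigma> = card {u\<in>V. \<sigma> u \<noteq> 0}"

lemma occupied_eq: assumes "\<sigma> \<in> W" shows "occupied V \<sigma> = occ \<sigma>"
proof -
  have vals: "\<forall>u\<in>V. \<sigma> u \<le> 2" using assms W_iff by blast
  have "{u\<in>V. \<sigma> u \<noteq> 0} = {u\<in>V. \<sigma> u = 1} \<union> {u\<in>V. \<sigma> u = 2}" using vals by force
  moreover have "card ({u\<in>V. \<sigma> u = 1} \<union> {u\<in>V. \<sigma> u = 2}) = card {u\<in>V. \<sigma> u = 1} + card {u\<in>V. \<sigma> u = 2}"
    using finV by (intro card_Un_disjoint) auto
  ultimately show ?thesis by (simp add: occupied_def colour_count_def occ_def)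
qed

definition Kv :: "'a \<Rightarrow> ('a \<Rightarrow> nat) \<Rightarrow> nat" where "Kv v \<sigma> = card {u\<in>N v. \<sigma> u \<noteq> 0}"
definition Kc :: "'a \<Rightarrow> nat \<Rightarrow> ('a \<Rightarrow> nat) \<Rightarrow> nat" where "Kc v i \<sigma> = card {u\<in>N v. \<sigma> u = i}"
definition hasc :: "'a \<Rightarrow> nat \<Rightarrow> ('a \<Rightarrow> nat) \<Rightarrow> bool" where "hasc v i \<sigma> = (\<exists>u\<in>N v. \<sigma> u = i)"

lemma hasc_Kc: "hasc v i \<sigma> \<longleftrightarrow> Kc v i \<sigma> > 0"
  using finN by (auto simp: hasc_def Kc_def card_gt_0_iff)

lemma Kv_split: assumes "\<sigma> \<in> W" shows "Kv v \<sigma> = Kc v 1 \<sigma> + Kc v 2 \<sigma>"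
proof -
  have vals: "\<forall>u\<in>V. \<sigma> u \<le> 2" using assms W_iff by blast
  have "{u\<in>N v. \<sigma> u \<noteq> 0} = {u\<in>N v. \<sigma> u = 1} \<union> {u\<in>N v. \<sigma> u = 2}" using vals N_sub by force
  moreover have "card ({u\<in>N v. \<sigma> u = 1} \<union> {u\<in>N v. \<sigma> u = 2}) = card {u\<in>N v. \<sigma> u = 1} + card {u\<in>N v. \<sigma> u = 2}"
    using finN by (intro card_Un_disjoint) auto
  ultimately show ?thesis by (simp add: Kv_def Kc_def)
qed

lemma upd_in_W:
  assumes "\<rho> \<in> W" "\<rho> v = 0" "v \<in> V" "k \<in> {1,2}" "\<not> hasc v (3 - k) \<rho>"
  shows "\<rho>(v := k) \<in> W"
proof -
  have r: "\<rho> \<in> extensional V" "\<forall>u\<in>V. \<rho> u \<le> 2" "\<forall>u w. E u w \<longrightarrow> \<rho> u = 0 \<or> \<rho> w = 0 \<or> \<rho> u = \<rho> w"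
    using assms(1) W_iff by blast+
  have nb: "\<And>w. E v w \<Longrightarrow> \<rho> w = 0 \<or> \<rho> w = k"
  proof -
    fix w assume e: "E v w"
    then have "w \<in> N v" using edgeV by (auto simp: N_def)
    then have "\<rho> w \<noteq> 3 - k" using assms(5) by (auto simp: hasc_def)
    moreover have "\<rho> w \<le> 2" using r e edgeV by blast
    ultimately show "\<rho> w = 0 \<or> \<rho> w = k" using assms(4) by auto
  qed
  show ?thesis unfolding W_iff
  proof (intro conjI allI impI ballI)
    show "\<rho>(v := k) \<in> extensional V" using r assms(3) by (auto simp: extensional_def)
  next
    fix u assume "u \<in> V" then show "(\<rho>(v := k)) u \<le> 2" using r assms(4) by auto
  next
    fix u w assume e: "E u w"
    show "(\<rho>(v := k)) u = 0 \<or> (\<rho>(v := k)) w = 0 \<or> (\<rho>(v := k)) u = (\<rho>(v := k)) w"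
    proof (cases "u = v")
      case True
      then have "w \<noteq> v" using e irr by auto
      then show ?thesis using True nb[of w] e by auto
    next
      case False
      show ?thesis
      proof (cases "w = v")
        case True
        then show ?thesis using False nb[of u] symE[OF e] by auto
      next
        case False2: False
        then show ?thesis using False r e by auto
      qed
    qed
  qed
qed

lemma occ_upd: assumes "\<rho> v = 0" "v \<in> V" "k \<noteq> 0" shows "occ (\<rho>(v := k)) = occ \<rho> + 1"
proof -
  have "{u\<in>V. (\<rho>(v := k)) u \<noteq> 0} = insert v {u\<in>V. \<rho> u \<noteq> 0}" using assms by auto
  moreover have "v \<notin> {u\<in>V. \<rho> u \<noteq> 0}" using assms by auto
  ultimately show ?thesis using finV by (simp add: occ_def)
qed

lemma Kv_upd: "Kv v (\<rho>(v := k)) = Kv v \<rho>"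
proof -
  have "{u\<in>N v. (\<rho>(v := k)) u \<noteq> 0} = {u\<in>N v. \<rho> u \<noteq> 0}" using v_notin_N by auto
  then show ?thesis by (simp add: Kv_def)
qed

lemma split_v:
  assumes v: "v \<in> V"
  shows "(\<Sum>\<sigma>\<in>W. h \<sigma>) = (\<Sum>\<rho>\<in>{\<rho>\<in>W. \<rho> v = 0}. h \<rho>
      + (if hasc v 2 \<rho> then 0 else h (\<rho>(v := 1)))
      + (if hasc v 1 \<rho> then 0 else h (\<rho>(v := 2))))"
proof -
  define W0 where "W0 = {\<rho>\<in>W. \<rho> v = 0}"
  have fW0: "finite W0" using finite_W by (simp add: W0_def)
  have part: "W = W0 \<union> {\<sigma>\<in>W. \<sigma> v = 1} \<union> {\<sigma>\<in>W. \<sigma> v = 2}"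
  proof -
    have "\<sigma> v = 0 \<or> \<sigma> v = 1 \<or> \<sigma> v = 2" if "\<sigma> \<in> W" for \<sigma>
    proof -
      have "\<sigma> v \<le> 2" using that v W_iff by blast
      then show ?thesis by arith
    qed
    then show ?thesis by (auto simp: W0_def)
  qed
  have s1: "(\<Sum>\<sigma>\<in>W. h \<sigma>) = (\<Sum>\<sigma>\<in>W0. h \<sigma>) + (\<Sum>\<sigma>\<in>{\<sigma>\<in>W. \<sigma> v = 1}. h \<sigma>) + (\<Sum>\<sigma>\<in>{\<sigma>\<in>W. \<sigma> v = 2}. h \<sigma>)"
    apply (subst part)
    apply (subst sum.union_disjoint)
    using finite_W apply (auto simp: W0_def)[3]
    apply (subst sum.union_disjoint)
    using finite_W apply (auto simp: W0_def)
    done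
  have sk: "(\<Sum>\<sigma>\<in>{\<sigma>\<in>W. \<sigma> v = k}. h \<sigma>) = (\<Sum>\<rho>\<in>W0. if hasc v (3 - k) \<rho> then 0 else h (\<rho>(v := k)))"
    if k: "k \<in> {1,2}" for k
  proof -
    have "(\<Sum>\<sigma>\<in>{\<sigma>\<in>W. \<sigma> v = k}. h \<sigma>) = (\<Sum>\<rho>\<in>{\<rho>\<in>W0. \<not> hasc v (3 - k) \<rho>}. h (\<rho>(v := k)))"
    proof (rule sum.reindex_bij_witness[where i = "\<lambda>\<rho>. \<rho>(v := k)" and j = "\<lambda>\<sigma>. \<sigma>(v := 0)"])
      fix \<sigma> assume a: "\<sigma> \<in> {\<sigma>\<in>W. \<sigma> v = k}"
      show "(\<sigma>(v := 0))(v := k) = \<sigma>" using a by auto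
      show "h ((\<sigma>(v := 0))(v := k)) = h \<sigma>" using a by auto
      have r: "\<sigma> \<in> extensional V" "\<forall>u\<in>V. \<sigma> u \<le> 2" "\<forall>u w. E u w \<longrightarrow> \<sigma> u = 0 \<or> \<sigma> w = 0 \<or> \<sigma> u = \<sigma> w"
        using a W_iff by blast+
      have "\<sigma>(v := 0) \<in> W" unfolding W_iff using r v by (auto simp: extensional_def)
      moreover have "\<not> hasc v (3 - k) (\<sigma>(v := 0))"
      proof
        assume "hasc v (3 - k) (\<sigma>(v := 0))"
        then obtain u where u: "u \<in> N v" "(\<sigma>(v := 0)) u = 3 - k" by (auto simp: hasc_def)
        then have "u \<noteq> v" "E v u" using v_notin_N by (auto simp: N_def)
        then have "\<sigma> u = 3 - k" using u by auto
        then show False using r \<open>E v u\<close> a k by force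
      qed
      ultimately show "\<sigma>(v := 0) \<in> {\<rho>\<in>W0. \<not> hasc v (3 - k) \<rho>}" by (simp add: W0_def)
    next
      fix \<rho> assume a: "\<rho> \<in> {\<rho>\<in>W0. \<not> hasc v (3 - k) \<rho>}"
      then show "(\<rho>(v := k))(v := 0) = \<rho>" by (auto simp: W0_def)
      show "\<rho>(v := k) \<in> {\<sigma>\<in>W. \<sigma> v = k}" using upd_in_W[of \<rho> v k] a v k by (auto simp: W0_def)
    qed
    also have "\<dots> = (\<Sum>\<rho>\<in>W0. if \<not> hasc v (3 - k) \<rho> then h (\<rho>(v := k)) else 0)"
      by (rule sum.inter_filter[OF fW0])
    also have "\<dots> = (\<Sum>\<rho>\<in>W0. if hasc v (3 - k) \<rho> then 0 else h (\<rho>(v := k)))"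
      by (intro sum.cong) auto
    finally show ?thesis .
  qed
  have "(\<Sum>\<sigma>\<in>W. h \<sigma>) = (\<Sum>\<rho>\<in>W0. h \<rho>) + (\<Sum>\<rho>\<in>W0. if hasc v 2 \<rho> then 0 else h (\<rho>(v := 1)))
        + (\<Sum>\<rho>\<in>W0. if hasc v 1 \<rho> then 0 else h (\<rho>(v := 2)))"
    using s1 sk[of 1] sk[of 2] by simp
  then show ?thesis by (simp add: sum.distrib W0_def)
qed

end


context wrg begin

definition cc :: real where "cc = (1+lam)^d"
definition ee :: real where "ee = ((1+lam)^d - 1) / d"

definition Z where "Z = (\<Sum>\<sigma>\<in>W. lam ^ occ \<sigma>)"
definition LHSv where "LHSv v = (\<Sum>\<sigma>\<in>W. lam ^ occ \<sigma> * ((1+2*lam)*cc*(if \<sigma> v \<noteq> 0 then 1 else 0) + ee * Kv v \<sigma>))"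
definition Gi where "Gi v i = (\<Sum>\<rho>\<in>{\<rho>\<in>W. \<rho> v = 0 \<and> hasc v i \<rho>}. lam ^ occ \<rho> *
   (lam*cc - ee * Kc v i \<rho> - (if hasc v (3-i) \<rho> then 0 else lam*ee*Kc v i \<rho>)))"

lemma Kc_upd: "Kc v i (\<rho>(v := k)) = Kc v i \<rho>"
proof -
  have "{u\<in>N v. (\<rho>(v := k)) u = i} = {u\<in>N v. \<rho> u = i}" using v_notin_N by auto
  then show ?thesis by (simp add: Kc_def)
qed

lemma hasc_upd: "hasc v i (\<rho>(v := k)) = hasc v i \<rho>"
  unfolding hasc_def by (metis (mono_tags) fun_upd_other v_notin_N)

lemma C1:
  assumes v: "v \<in> V"
  shows "LHSv v = 2*lam*cc*Z - (Gi v 1 + Gi v 2)"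
proof -
  define W0 where "W0 = {\<rho>\<in>W. \<rho> v = 0}"
  have fW0: "finite W0" using finite_W by (simp add: W0_def)
  have G: "Gi v i = (\<Sum>\<rho>\<in>W0. if hasc v i \<rho> then lam ^ occ \<rho> *
   (lam*cc - ee * Kc v i \<rho> - (if hasc v (3-i) \<rho> then 0 else lam*ee*Kc v i \<rho>)) else 0)" for i
  proof -
    have "{\<rho>\<in>W. \<rho> v = 0 \<and> hasc v i \<rho>} = {\<rho>\<in>W0. hasc v i \<rho>}" by (auto simp: W0_def)
    then show ?thesis unfolding Gi_def by (simp add: sum.inter_filter[OF fW0])
  qed
  have L: "LHSv v = (\<Sum>\<rho>\<in>W0. lam ^ occ \<rho> * (ee * Kv v \<rho>)
      + (if hasc v 2 \<rho> then 0 else lam ^ (occ \<rho> + 1) * ((1+2*lam)*cc + ee * Kv v \<rho>))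
      + (if hasc v 1 \<rho> then 0 else lam ^ (occ \<rho> + 1) * ((1+2*lam)*cc + ee * Kv v \<rho>)))"
    unfolding LHSv_def
    apply (subst split_v[OF v])
    apply (intro sum.cong)
     apply (simp add: W0_def)
    apply (simp add: W0_def occ_upd[OF _ v] Kv_upd)
    done
  have Zs: "Z = (\<Sum>\<rho>\<in>W0. lam ^ occ \<rho>
      + (if hasc v 2 \<rho> then 0 else lam ^ (occ \<rho> + 1))
      + (if hasc v 1 \<rho> then 0 else lam ^ (occ \<rho> + 1)))"
    unfolding Z_def
    apply (subst split_v[OF v])
    apply (intro sum.cong)
     apply (simp add: W0_def)
    apply (simp add: W0_def occ_upd[OF _ v])
    done
  have pt: "lam ^ occ \<rho> * (ee * Kv v \<rho>)
      + (if hasc v 2 \<rho> then 0 else lam ^ (occ \<rho> + 1) * ((1+2*lam)*cc + ee * Kv v \<rho>))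
      + (if hasc v 1 \<rho> then 0 else lam ^ (occ \<rho> + 1) * ((1+2*lam)*cc + ee * Kv v \<rho>))
    = 2*lam*cc*(lam ^ occ \<rho>
      + (if hasc v 2 \<rho> then 0 else lam ^ (occ \<rho> + 1))
      + (if hasc v 1 \<rho> then 0 else lam ^ (occ \<rho> + 1)))
      - ((if hasc v 1 \<rho> then lam ^ occ \<rho> *
   (lam*cc - ee * Kc v 1 \<rho> - (if hasc v (3-1) \<rho> then 0 else lam*ee*Kc v 1 \<rho>)) else 0)
       + (if hasc v 2 \<rho> then lam ^ occ \<rho> *
   (lam*cc - ee * Kc v 2 \<rho> - (if hasc v (3-2) \<rho> then 0 else lam*ee*Kc v 2 \<rho>)) else 0))"
    if r: "\<rho> \<in> W0" for \<rho>
  proof -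
    have kv: "Kv v \<rho> = Kc v 1 \<rho> + Kc v 2 \<rho>" using r Kv_split by (simp add: W0_def)
    have h1: "hasc v 1 \<rho> \<longleftrightarrow> Kc v 1 \<rho> > 0" and h2: "hasc v 2 \<rho> \<longleftrightarrow> Kc v 2 \<rho> > 0" using hasc_Kc by auto
    show ?thesis
      by (cases "hasc v 1 \<rho>"; cases "hasc v 2 \<rho>") (use h1 h2 in \<open>simp_all add: kv algebra_simps\<close>)
  qed
  have "LHSv v = (\<Sum>\<rho>\<in>W0. 2*lam*cc*(lam ^ occ \<rho>
      + (if hasc v 2 \<rho> then 0 else lam ^ (occ \<rho> + 1))
      + (if hasc v 1 \<rho> then 0 else lam ^ (occ \<rho> + 1)))
      - ((if hasc v 1 \<rho> then lam ^ occ \<rho> *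
   (lam*cc - ee * Kc v 1 \<rho> - (if hasc v (3-1) \<rho> then 0 else lam*ee*Kc v 1 \<rho>)) else 0)
       + (if hasc v 2 \<rho> then lam ^ occ \<rho> *
   (lam*cc - ee * Kc v 2 \<rho> - (if hasc v (3-2) \<rho> then 0 else lam*ee*Kc v 2 \<rho>)) else 0)))"
    unfolding L by (intro sum.cong refl pt)
  also have "\<dots> = 2*lam*cc*Z - (Gi v 1 + Gi v 2)"
    unfolding Zs G by (simp add: sum_subtractf sum_distrib_left sum.distrib distrib_left)
  finally show ?thesis .
qed

end


context wrg begin

definition Bs where "Bs v i = {\<rho>\<in>W. \<rho> v = 0 \<and> \<not> hasc v i \<rho>}"
definition Rs where "Rs v i \<rho> = {u\<in>N v. \<rho> u = 0 \<and> (\<forall>w. E u w \<longrightarrow> \<rho> w \<noteq> 3 - i)}"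
definition inner where "inner v i \<rho> = (\<Sum>T\<in>Pow (Rs v i \<rho>) - {{}}. lam ^ card T *
    (lam*cc - ee * card T - (if hasc v (3-i) \<rho> then 0 else lam*ee*card T)))"
definition zer where "zer v i \<rho> = (\<lambda>u. if u \<in> N v \<and> \<rho> u = i then 0 else \<rho> u)"
definition Ts where "Ts v i \<rho> = {u\<in>N v. \<rho> u = i}"
definition Phi where "Phi i T \<rho> = (\<lambda>u. if u \<in> T then i else \<rho> u)"

lemma W_D: assumes "\<sigma> \<in> W"
  shows "\<sigma> \<in> extensional V" "\<And>u. u \<in> V \<Longrightarrow> \<sigma> u \<le> 2" "\<And>u w. E u w \<Longrightarrow> \<sigma> u = 0 \<or> \<sigma> w = 0 \<or> \<sigma> u = \<sigma> w"
  using assms W_iff by blast+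

lemma finRs: "finite (Rs v i \<rho>)" using finN by (simp add: Rs_def)
lemma Rs_sub: "Rs v i \<rho> \<subseteq> N v" by (auto simp: Rs_def)

lemma E1:
  assumes v: "v \<in> V" and i: "i \<in> {1,2}"
  shows "Gi v i = (\<Sum>\<rho>\<in>Bs v i. lam ^ occ \<rho> * inner v i \<rho>)"
proof -
  have i0: "i \<noteq> 0" "i \<le> 2" "3 - i \<noteq> 0" "3 - i \<noteq> i" "3 - i \<le> 2" using i by auto
  define j where "j = 3 - i"
  have ij: "\<And>x::nat. x \<le> 2 \<Longrightarrow> x \<noteq> j \<Longrightarrow> x = 0 \<or> x = i" using i by (auto simp: j_def)
  have fB: "finite (Bs v i)" using finite_W by (simp add: Bs_def)
  let ?L = "{\<rho>\<in>W. \<rho> v = 0 \<and> hasc v i \<rho>}"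
  let ?S = "Sigma (Bs v i) (\<lambda>\<rho>. Pow (Rs v i \<rho>) - {{}})"
  let ?g = "\<lambda>\<rho>. lam ^ occ \<rho> *
   (lam*cc - ee * Kc v i \<rho> - (if hasc v (3-i) \<rho> then 0 else lam*ee*Kc v i \<rho>))"
  let ?h = "\<lambda>(\<rho>, T). lam ^ occ \<rho> * (lam ^ card T *
    (lam*cc - ee * card T - (if hasc v (3-i) \<rho> then 0 else lam*ee*card T)))"
  have "Gi v i = sum ?g ?L" by (simp add: Gi_def)
  also have "\<dots> = sum ?h ?S"
  proof (rule sum.reindex_bij_witness[where i = "\<lambda>(\<rho>, T). Phi i T \<rho>" and j = "\<lambda>\<rho>. (zer v i \<rho>, Ts v i \<rho>)"])
    fix \<rho> assume a: "\<rho> \<in> ?L"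
    then have rW: "\<rho> \<in> W" and rv: "\<rho> v = 0" and hi: "hasc v i \<rho>" by auto
    note r = W_D[OF rW]
    show "(\<lambda>(\<rho>, T). Phi i T \<rho>) (zer v i \<rho>, Ts v i \<rho>) = \<rho>"
      by (auto simp: Phi_def zer_def Ts_def)
    have zW: "zer v i \<rho> \<in> W" unfolding W_iff
    proof (intro conjI allI impI ballI)
      show "zer v i \<rho> \<in> extensional V" using r(1) N_sub by (auto simp: zer_def extensional_def)
      show "zer v i \<rho> u \<le> 2" if "u \<in> V" for u using r(2)[OF that] by (simp add: zer_def)
      show "zer v i \<rho> u = 0 \<or> zer v i \<rho> w = 0 \<or> zer v i \<rho> u = zer v i \<rho> w" if "E u w" for u w
        using r(3)[OF that] by (simp add: zer_def)
    qed
    have zv: "zer v i \<rho> v = 0" using rv by (simp add: zer_def)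
    have nh: "\<not> hasc v i (zer v i \<rho>)" using i0 by (auto simp: hasc_def zer_def)
    have TR: "Ts v i \<rho> \<subseteq> Rs v i (zer v i \<rho>)"
    proof
      fix u assume u: "u \<in> Ts v i \<rho>"
      then have uN: "u \<in> N v" and ui: "\<rho> u = i" by (auto simp: Ts_def)
      have "zer v i \<rho> w \<noteq> 3 - i" if e: "E u w" for w
      proof
        assume z: "zer v i \<rho> w = 3 - i"
        then have "\<rho> w = 3 - i" using i0 by (auto simp: zer_def split: if_splits)
        then show False using r(3)[OF e] ui i0 by auto
      qed
      then show "u \<in> Rs v i (zer v i \<rho>)" using uN ui by (auto simp: Rs_def zer_def)
    qed
    have Tne: "Ts v i \<rho> \<noteq> {}" using hi by (auto simp: hasc_def Ts_def)
    show "(zer v i \<rho>, Ts v i \<rho>) \<in> ?S" using zW zv nh TR Tne by (auto simp: Bs_def)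
    have occ_eq: "occ \<rho> = occ (zer v i \<rho>) + card (Ts v i \<rho>)"
    proof -
      have "{u\<in>V. \<rho> u \<noteq> 0} = {u\<in>V. zer v i \<rho> u \<noteq> 0} \<union> Ts v i \<rho>"
        using N_sub i0 by (auto simp: zer_def Ts_def)
      moreover have "{u\<in>V. zer v i \<rho> u \<noteq> 0} \<inter> Ts v i \<rho> = {}" by (auto simp: zer_def Ts_def)
      moreover have "finite (Ts v i \<rho>)" using finN by (simp add: Ts_def)
      ultimately show ?thesis using finV by (simp add: occ_def card_Un_disjoint)
    qed
    have hj: "hasc v (3 - i) (zer v i \<rho>) = hasc v (3 - i) \<rho>"
      unfolding hasc_def zer_def using i0 by force
    show "?h (zer v i \<rho>, Ts v i \<rho>) = ?g \<rho>"
      using occ_eq hj by (simp add: Kc_def Ts_def power_add algebra_simps)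
  next
    fix b assume b: "b \<in> ?S"
    then obtain \<rho> T where bdef: "b = (\<rho>, T)" and rB: "\<rho> \<in> Bs v i" and TR: "T \<subseteq> Rs v i \<rho>" and Tne: "T \<noteq> {}"
      by auto
    from rB have rW: "\<rho> \<in> W" and rv: "\<rho> v = 0" and nh: "\<not> hasc v i \<rho>" by (auto simp: Bs_def)
    note r = W_D[OF rW]
    have TN: "T \<subseteq> N v" using TR Rs_sub[of v i \<rho>] by blast
    have T0: "\<And>u. u \<in> T \<Longrightarrow> \<rho> u = 0" using TR by (auto simp: Rs_def)
    have Tj: "\<And>u w. u \<in> T \<Longrightarrow> E u w \<Longrightarrow> \<rho> w \<noteq> j" using TR by (auto simp: Rs_def j_def)
    have nhi: "\<And>u. u \<in> N v \<Longrightarrow> \<rho> u \<noteq> i" using nh by (auto simp: hasc_def)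
    have eq1: "(zer v i (Phi i T \<rho>), Ts v i (Phi i T \<rho>)) = b"
    proof -
      have "zer v i (Phi i T \<rho>) = \<rho>"
      proof
        fix u show "zer v i (Phi i T \<rho>) u = \<rho> u"
          using T0[of u] nhi[of u] TN by (auto simp: zer_def Phi_def)
      qed
      moreover have "Ts v i (Phi i T \<rho>) = T" using TN nhi by (auto simp: Ts_def Phi_def)
      ultimately show ?thesis by (simp add: bdef)
    qed
    have PW: "Phi i T \<rho> \<in> W" unfolding W_iff
    proof (intro conjI allI impI ballI)
      show "Phi i T \<rho> \<in> extensional V" using r(1) TN N_sub by (auto simp: Phi_def extensional_def)
      show "Phi i T \<rho> u \<le> 2" if "u \<in> V" for u using r(2)[OF that] i0 by (simp add: Phi_def)
      show "Phi i T \<rho> u = 0 \<or> Phi i T \<rho> w = 0 \<or> Phi i T \<rho> u = Phi i T \<rho> w" if e: "E u w" for u w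
      proof (cases "u \<in> T")
        case True
        show ?thesis
        proof (cases "w \<in> T")
          case True then show ?thesis using \<open>u \<in> T\<close> by (simp add: Phi_def)
        next
          case False
          have "\<rho> w \<le> 2" using r(2) edgeV[OF e] by blast
          then have "\<rho> w = 0 \<or> \<rho> w = i" using ij Tj[OF True e] by blast
          then show ?thesis using True False by (auto simp: Phi_def)
        qed
      next
        case False
        show ?thesis
        proof (cases "w \<in> T")
          case True
          have "\<rho> u \<le> 2" using r(2) edgeV[OF e] by blast
          then have "\<rho> u = 0 \<or> \<rho> u = i" using ij Tj[OF True symE[OF e]] by blast
          then show ?thesis using True False by (auto simp: Phi_def)
        next
          case False2: False
          then show ?thesis using False r(3)[OF e] by (simp add: Phi_def)
        qed
      qed
    qed
    show "(\<lambda>\<rho>. (zer v i \<rho>, Ts v i \<rho>)) ((\<lambda>(\<rho>, T). Phi i T \<rho>) b) = b"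
      using eq1 by (simp add: bdef)
    have Pv: "Phi i T \<rho> v = 0" using rv TN v_notin_N by (auto simp: Phi_def)
    have Ph: "hasc v i (Phi i T \<rho>)" using Tne TN by (auto simp: hasc_def Phi_def)
    show "(\<lambda>(\<rho>, T). Phi i T \<rho>) b \<in> ?L" using PW Pv Ph by (simp add: bdef)
  qed
  also have "\<dots> = (\<Sum>\<rho>\<in>Bs v i. \<Sum>T\<in>Pow (Rs v i \<rho>) - {{}}. lam ^ occ \<rho> * (lam ^ card T *
    (lam*cc - ee * card T - (if hasc v (3-i) \<rho> then 0 else lam*ee*card T))))"
    using fB finRs by (subst sum.Sigma) auto
  also have "\<dots> = (\<Sum>\<rho>\<in>Bs v i. lam ^ occ \<rho> * inner v i \<rho>)"
    by (simp add: inner_def sum_distrib_left)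
  finally show ?thesis .
qed

end


context wrg begin

lemma ee_nonneg: "ee \<ge> 0"
  using lam by (simp add: ee_def one_le_power)

lemma inner_eq:
  "inner v i \<rho> = lam * (cc * ((1+lam) ^ card (Rs v i \<rho>) - 1) - ee * card (Rs v i \<rho>) * (1+lam)^card (Rs v i \<rho>))
     + (if hasc v (3-i) \<rho> then lam * ee * (\<Sum>T\<in>Pow (Rs v i \<rho>). lam ^ card T * card T) else 0)"
  if "card (Rs v i \<rho>) \<le> d"
  unfolding inner_def cc_def ee_def by (rule inner_sum[OF lam finRs that])

lemma card_Rs: "v \<in> V \<Longrightarrow> card (Rs v i \<rho>) \<le> d"
  using card_mono[OF finN Rs_sub] card_N by metis

lemma gt_nonneg: assumes "v \<in> V" shows "cc * ((1+lam) ^ card (Rs v i \<rho>) - 1) - ee * card (Rs v i \<rho>) * (1+lam)^card (Rs v i \<rho>) \<ge> 0"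
proof -
  have "0 \<le> lam" using lam by simp
  from g_term_nonneg[OF this card_Rs[OF assms]] show ?thesis unfolding cc_def ee_def .
qed

lemma inner_nonneg: assumes "v \<in> V" shows "inner v i \<rho> \<ge> 0"
proof -
  have p: "(\<Sum>T\<in>Pow (Rs v i \<rho>). lam ^ card T * card T) \<ge> 0" by (rule P1_nonneg) (use lam in simp)
  have "lam * ee * (\<Sum>T\<in>Pow (Rs v i \<rho>). lam ^ card T * card T) \<ge> 0"
    using lam ee_nonneg p by simp
  then show ?thesis
    using inner_eq[OF card_Rs[OF assms]] gt_nonneg[OF assms, of i \<rho>] lam by (simp add: mult_nonneg_nonneg)
qed

lemma Gi_nonneg: assumes "v \<in> V" "i \<in> {1,2}" shows "Gi v i \<ge> 0"
  unfolding E1[OF assms] using inner_nonneg[OF assms(1)] lam by (intro sum_nonneg) simp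

lemma Gi_pos:
  assumes v: "v \<in> V" and u: "u \<in> N v" and w: "w \<in> N v" and uw: "u \<noteq> w" and ne: "\<not> E u w"
  shows "Gi v 1 > 0"
proof -
  define \<rho> where "\<rho> = (\<lambda>z. if z \<in> V then (if z = w then 2 else 0) else (undefined::nat))"
  have wV: "w \<in> V" "u \<in> V" using u w N_sub by auto
  have vw: "v \<noteq> w" using w v_notin_N by auto
  have rW: "\<rho> \<in> W" unfolding W_iff
  proof (intro conjI allI impI ballI)
    show "\<rho> \<in> extensional V" by (simp add: \<rho>_def extensional_def)
    show "\<rho> a \<le> 2" if "a \<in> V" for a using that by (simp add: \<rho>_def)
    show "\<rho> a = 0 \<or> \<rho> b = 0 \<or> \<rho> a = \<rho> b" if "E a b" for a b
      using edgeV[OF that] unfolding \<rho>_def by (cases "a = w"; cases "b = w") simp_all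
  qed
  have rB: "\<rho> \<in> Bs v 1" using rW vw v wV by (auto simp: Bs_def hasc_def \<rho>_def N_def)
  have h2: "hasc v (3 - 1) \<rho>" using w wV by (auto simp: hasc_def \<rho>_def)
  have uR: "u \<in> Rs v 1 \<rho>" using u uw ne wV edgeV by (auto simp: Rs_def \<rho>_def)
  then have Rne: "Rs v 1 \<rho> \<noteq> {}" by auto
  have d1: "d \<ge> 1" using card_N[OF v] u finN by (metis One_nat_def card_gt_0_iff empty_iff less_eq_Suc_le)
  have "ee > 0"
  proof -
    have "(1+lam)^d > 1" using lam d1 by (simp add: one_less_power)
    then show ?thesis using d1 by (simp add: ee_def)
  qed
  then have "lam * ee * (\<Sum>T\<in>Pow (Rs v 1 \<rho>). lam ^ card T * card T) > 0"
    using lam P1_pos[OF lam finRs Rne] by simp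
  moreover have ie: "inner v 1 \<rho> = lam * (cc * ((1+lam) ^ card (Rs v 1 \<rho>) - 1) - ee * card (Rs v 1 \<rho>) * (1+lam)^card (Rs v 1 \<rho>))
     + lam * ee * (\<Sum>T\<in>Pow (Rs v 1 \<rho>). lam ^ card T * card T)"
    using inner_eq[OF card_Rs[OF v], of 1 \<rho>] h2 by simp
  moreover have "lam * (cc * ((1+lam) ^ card (Rs v 1 \<rho>) - 1) - ee * card (Rs v 1 \<rho>) * (1+lam)^card (Rs v 1 \<rho>)) \<ge> 0"
    using gt_nonneg[OF v, of 1 \<rho>] lam by simp
  ultimately have ip: "inner v 1 \<rho> > 0" by linarith
  have fB: "finite (Bs v 1)" using finite_W by (simp add: Bs_def)
  have g: "Gi v 1 = (\<Sum>\<rho>\<in>Bs v 1. lam ^ occ \<rho> * inner v 1 \<rho>)" using E1[OF v, of 1] by simp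
  have "0 < (\<Sum>\<rho>\<in>Bs v 1. lam ^ occ \<rho> * inner v 1 \<rho>)"
    apply (rule sum_pos2[OF fB rB])
    using ip lam apply simp
    using inner_nonneg[OF v] lam apply simp
    done
  then show ?thesis using g by simp
qed

lemma clique_closed:
  assumes v: "v \<in> V" and cl: "\<forall>a\<in>N v. \<forall>b\<in>N v. a \<noteq> b \<longrightarrow> E a b" and u: "u \<in> N v"
  shows "N u = insert v (N v - {u})"
proof -
  have uV: "u \<in> V" using u N_sub by auto
  note uV = uV
  have sub: "insert v (N v - {u}) \<subseteq> N u"
  proof
    fix x assume x: "x \<in> insert v (N v - {u})"
    show "x \<in> N u"
    proof (cases "x = v")
      case True
      have "E v u" using u by (simp add: N_def)
      then show ?thesis using True v symE[OF \<open>E v u\<close>] uV by (simp add: N_def)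
    next
      case False
      then have xN: "x \<in> N v" and xu: "u \<noteq> x" using x by auto
      have "E u x" using cl[rule_format, OF u xN xu] .
      then show ?thesis using edgeV[OF \<open>E u x\<close>] by (simp add: N_def)
    qed
  qed
  have "card (insert v (N v - {u})) = d"
  proof -
    have "v \<notin> N v - {u}" using v_notin_N[of v] by blast
    then have "card (insert v (N v - {u})) = Suc (card (N v - {u}))" using finN by simp
    also have "card (N v - {u}) = d - 1" using card_N[OF v] u finN by (simp add: card_Diff_singleton)
    also have "Suc (d - 1) = d"
    proof -
      have "card (N v) > 0" using u finN card_gt_0_iff by blast
      then show ?thesis using card_N[OF v] by simp
    qed
    finally show ?thesis .
  qed
  then have "card (insert v (N v - {u})) = card (N u)" using card_N[OF uV] by simp
  then show ?thesis using card_subset_eq[OF finN sub] by simp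
qed

lemma Gi_zero:
  assumes v: "v \<in> V" and i: "i \<in> {1,2}" and cl: "\<forall>a\<in>N v. \<forall>b\<in>N v. a \<noteq> b \<longrightarrow> E a b"
  shows "Gi v i = 0"
proof -
  have "inner v i \<rho> = 0" if r: "\<rho> \<in> Bs v i" for \<rho>
  proof (cases "hasc v (3 - i) \<rho>")
    case True
    then obtain w where w: "w \<in> N v" "\<rho> w = 3 - i" by (auto simp: hasc_def)
    have "Rs v i \<rho> = {}"
    proof (rule ccontr)
      assume "Rs v i \<rho> \<noteq> {}"
      then obtain u where uR: "u \<in> Rs v i \<rho>" by auto
      then have uN: "u \<in> N v" "\<rho> u = 0" by (auto simp: Rs_def)
      then have "u \<noteq> w" using w i by auto
      then have "E u w" using cl uN w by auto
      then show False using uR w by (auto simp: Rs_def)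
    qed
    then show ?thesis by (simp add: inner_def)
  next
    case False
    have rW: "\<rho> \<in> W" and nh: "\<not> hasc v i \<rho>" using r by (auto simp: Bs_def)
    have rv: "\<rho> v = 0" using r by (simp add: Bs_def)
    have z: "\<rho> u = 0" if "u \<in> N v" for u
    proof -
      have "\<rho> u \<le> 2" using W_D(2)[OF rW] that N_sub by auto
      moreover have "\<rho> u \<noteq> i" "\<rho> u \<noteq> 3 - i" using nh False that by (auto simp: hasc_def)
      ultimately show ?thesis using i by auto
    qed
    have "Rs v i \<rho> = N v"
    proof
      show "Rs v i \<rho> \<subseteq> N v" by (rule Rs_sub)
      show "N v \<subseteq> Rs v i \<rho>"
      proof
        fix u assume uN: "u \<in> N v"
        have "\<rho> x \<noteq> 3 - i" if "E u x" for x
        proof -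
          have "x \<in> N u" using that edgeV by (auto simp: N_def)
          then have "x = v \<or> x \<in> N v" using clique_closed[OF v cl uN] by auto
          then have "\<rho> x = 0" using rv z by auto
          then show ?thesis using i by auto
        qed
        then show "u \<in> Rs v i \<rho>" using uN z by (auto simp: Rs_def)
      qed
    qed
    then have "card (Rs v i \<rho>) = d" using card_N[OF v] by simp
    then show ?thesis using inner_eq[OF card_Rs[OF v], of i \<rho>] False g_term_zero[of lam d]
      by (simp add: cc_def ee_def)
  qed
  then show ?thesis unfolding E1[OF v i] by simp
qed

end


context wrg begin

lemma sum_Kv: assumes "\<sigma> \<in> W" shows "(\<Sum>v\<in>V. Kv v \<sigma>) = d * occ \<sigma>"
proof -
  have k: "Kv v \<sigma> = (\<Sum>u\<in>V. if E v u \<and> \<sigma> u \<noteq> 0 then 1 else 0)" for v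
  proof -
    have "{u\<in>N v. \<sigma> u \<noteq> 0} = {u\<in>V. E v u \<and> \<sigma> u \<noteq> 0}" by (auto simp: N_def)
    then show ?thesis using finV by (simp add: Kv_def sum.If_cases Int_def)
  qed
  have c: "card {v\<in>V. E v u} = d" if "u \<in> V" for u
  proof -
    have "{v\<in>V. E v u} = N u" using symE by (auto simp: N_def)
    then show ?thesis using card_N[OF that] by simp
  qed
  have "(\<Sum>v\<in>V. Kv v \<sigma>) = (\<Sum>v\<in>V. \<Sum>u\<in>V. if E v u \<and> \<sigma> u \<noteq> 0 then 1 else 0)" using k by simp
  also have "\<dots> = (\<Sum>u\<in>V. \<Sum>v\<in>V. if E v u \<and> \<sigma> u \<noteq> 0 then 1 else 0)" by (rule sum.swap)
  also have "\<dots> = (\<Sum>u\<in>V. if \<sigma> u \<noteq> 0 then d else 0)"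
  proof (intro sum.cong refl)
    fix u assume u: "u \<in> V"
    show "(\<Sum>v\<in>V. if E v u \<and> \<sigma> u \<noteq> 0 then 1 else 0) = (if \<sigma> u \<noteq> 0 then d else 0)"
    proof (cases "\<sigma> u \<noteq> 0")
      case True
      then have "(\<Sum>v\<in>V. if E v u \<and> \<sigma> u \<noteq> 0 then 1 else (0::nat)) = card {v\<in>V. E v u}"
        using finV by (simp add: sum.If_cases Int_def)
      then show ?thesis using c[OF u] True by simp
    qed simp
  qed
  also have "\<dots> = d * occ \<sigma>" using finV by (simp add: sum.If_cases Int_def occ_def)
  finally show ?thesis .
qed

lemma sum_ind: "(\<Sum>v\<in>V. (if 0 < \<sigma> v then 1 else 0::real)) = occ \<sigma>"
  using finV by (simp add: sum.If_cases Int_def occ_def)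

definition M where "M = (\<Sum>\<sigma>\<in>W. lam ^ occ \<sigma> * occ \<sigma>)"
definition Zk where "Zk = (1+2*lam)*cc + ee*d"
definition Gsum where "Gsum = (\<Sum>v\<in>V. Gi v 1 + Gi v 2)"

lemma sum_LHS: "(\<Sum>v\<in>V. LHSv v) = Zk * M"
proof -
  have "(\<Sum>v\<in>V. LHSv v) = (\<Sum>\<sigma>\<in>W. \<Sum>v\<in>V. lam ^ occ \<sigma> * ((1+2*lam)*cc*(if \<sigma> v \<noteq> 0 then 1 else 0) + ee * Kv v \<sigma>))"
    unfolding LHSv_def by (rule sum.swap)
  also have "\<dots> = (\<Sum>\<sigma>\<in>W. lam ^ occ \<sigma> * ((1+2*lam)*cc * occ \<sigma> + ee * (d * occ \<sigma>)))"
  proof (intro sum.cong refl)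
    fix \<sigma> assume s: "\<sigma> \<in> W"
    have "(\<Sum>v\<in>V. lam ^ occ \<sigma> * ((1+2*lam)*cc*(if \<sigma> v \<noteq> 0 then 1 else 0) + ee * Kv v \<sigma>))
       = lam ^ occ \<sigma> * ((1+2*lam)*cc * (\<Sum>v\<in>V. (if \<sigma> v \<noteq> 0 then 1 else 0::real)) + ee * (\<Sum>v\<in>V. real (Kv v \<sigma>)))"
      by (simp add: sum_distrib_left sum.distrib distrib_left)
    also have "(\<Sum>v\<in>V. real (Kv v \<sigma>)) = real (d * occ \<sigma>)"
      using sum_Kv[OF s] by (metis of_nat_sum)
    finally show "(\<Sum>v\<in>V. lam ^ occ \<sigma> * ((1+2*lam)*cc*(if \<sigma> v \<noteq> 0 then 1 else 0) + ee * Kv v \<sigma>))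
       = lam ^ occ \<sigma> * ((1+2*lam)*cc * occ \<sigma> + ee * (d * occ \<sigma>))"
      by (simp add: sum_ind)
  qed
  also have "\<dots> = Zk * M"
    by (simp add: Zk_def M_def sum_distrib_left sum.distrib algebra_simps)
  finally show ?thesis .
qed

lemma Zk_pos: "Zk > 0"
proof -
  have "cc \<ge> 1" using lam by (simp add: cc_def one_le_power)
  then have "(1+2*lam)*cc > 0" using lam by simp
  moreover have "ee * d \<ge> 0" using ee_nonneg by simp
  ultimately show ?thesis by (simp add: Zk_def)
qed

lemma Z_pos: "Z > 0"
proof -
  define z where "z = (\<lambda>u. if u \<in> V then 0 else (undefined::nat))"
  have zW: "z \<in> W" unfolding W_iff by (auto simp: z_def extensional_def)
  show ?thesis unfolding Z_def
    apply (rule sum_pos2[OF finite_W zW])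
    using lam apply simp
    using lam apply simp
    done
qed

lemma occupancy_eq: "WR_occupancy V E lam = M / Z / card V"
proof -
  have "WR_partition V E lam = Z" unfolding WR_partition_def Z_def
    by (intro sum.cong refl) (simp add: occupied_eq)
  moreover have "(\<Sum>c\<in>W. real (occupied V c) * lam ^ occupied V c / Z) = M / Z"
    unfolding M_def sum_divide_distrib by (intro sum.cong refl) (simp add: occupied_eq)
  ultimately show ?thesis by (simp add: WR_occupancy_def)
qed

definition cliqueN where "cliqueN \<longleftrightarrow> (\<forall>v\<in>V. \<forall>a\<in>N v. \<forall>b\<in>N v. a \<noteq> b \<longrightarrow> E a b)"

lemma Gsum_nonneg: "Gsum \<ge> 0"
  unfolding Gsum_def by (intro sum_nonneg add_nonneg_nonneg Gi_nonneg) auto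

lemma Gsum_zero_iff: "Gsum = 0 \<longleftrightarrow> cliqueN"
proof
  assume "cliqueN"
  then show "Gsum = 0" unfolding Gsum_def cliqueN_def by (simp add: Gi_zero)
next
  assume g: "Gsum = 0"
  show cliqueN unfolding cliqueN_def
  proof (intro ballI impI)
    fix v a b assume v: "v \<in> V" and a: "a \<in> N v" and b: "b \<in> N v" and ab: "a \<noteq> b"
    show "E a b"
    proof (rule ccontr)
      assume ne: "\<not> E a b"
      have "Gi v 1 > 0" by (rule Gi_pos[OF v a b ab ne])
      then have "Gi v 1 + Gi v 2 > 0" using Gi_nonneg[OF v, of 2] by simp
      then have "Gsum > 0" unfolding Gsum_def
        apply (intro sum_pos2[OF finV v])
         apply simp
        using Gi_nonneg by (simp add: add_nonneg_nonneg)
      then show False using g by simp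
    qed
  qed
qed

lemma master: "WR_occupancy V E lam = 2*lam*cc/Zk - Gsum/(Zk*Z*card V)"
proof -
  have n: "real (card V) > 0" using finV Vne by (simp add: card_gt_0_iff)
  have "(\<Sum>v\<in>V. LHSv v) = (\<Sum>v\<in>V. 2*lam*cc*Z - (Gi v 1 + Gi v 2))"
    by (intro sum.cong refl C1)
  also have "\<dots> = card V * (2*lam*cc*Z) - Gsum" by (simp add: Gsum_def sum_subtractf)
  finally have "Zk * M = card V * (2*lam*cc*Z) - Gsum" using sum_LHS by simp
  then have "M = (card V * (2*lam*cc*Z) - Gsum) / Zk" using Zk_pos by (simp add: field_simps)
  then show ?thesis unfolding occupancy_eq using Zk_pos Z_pos n by (simp add: field_simps)
qed

end


context wrg begin

lemma closedN: assumes cl: cliqueN and v: "v \<in> V" and x: "x \<in> insert v (N v)"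
  shows "insert x (N x) = insert v (N v)"
proof (cases "x = v")
  case True then show ?thesis by simp
next
  case False
  then have xN: "x \<in> N v" using x by simp
  have c: "\<forall>a\<in>N v. \<forall>b\<in>N v. a \<noteq> b \<longrightarrow> E a b" using cl v by (simp add: cliqueN_def)
  have "N x = insert v (N v - {x})" by (rule clique_closed[OF v c xN])
  then show ?thesis using xN by auto
qed

lemma cliqueN_iff: "cliqueN \<longleftrightarrow> disjoint_union_of_cliques V E d"
proof
  assume cl: cliqueN
  define P where "P = (\<lambda>v. insert v (N v)) ` V"
  have un: "\<Union>P = V" using N_sub by (auto simp: P_def)
  have dj: "disjoint P" unfolding disjoint_def
  proof (intro ballI impI)
    fix A B assume A: "A \<in> P" and B: "B \<in> P" and AB: "A \<noteq> B"
    obtain a where a: "a \<in> V" "A = insert a (N a)" using A by (auto simp: P_def)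
    obtain b where b: "b \<in> V" "B = insert b (N b)" using B by (auto simp: P_def)
    show "A \<inter> B = {}"
    proof (rule ccontr)
      assume "A \<inter> B \<noteq> {}"
      then obtain x where "x \<in> A" "x \<in> B" by auto
      then have "insert x (N x) = A" "insert x (N x) = B"
        using closedN[OF cl a(1), of x] closedN[OF cl b(1), of x] a b by simp_all
      then show False using AB by simp
    qed
  qed
  have ne: "{} \<notin> P" by (auto simp: P_def)
  have cardB: "\<forall>B\<in>P. card B = d + 1"
  proof
    fix B assume "B \<in> P"
    then obtain v where v: "v \<in> V" "B = insert v (N v)" by (auto simp: P_def)
    then show "card B = d + 1" using finN v_notin_N[of v] card_N[OF v(1)] by simp
  qed
  have adj: "\<forall>u\<in>V. \<forall>w\<in>V. E u w \<longleftrightarrow> (u \<noteq> w \<and> (\<exists>B\<in>P. u \<in> B \<and> w \<in> B))"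
  proof (intro ballI iffI)
    fix u w assume u: "u \<in> V" and w: "w \<in> V" and e: "E u w"
    have "u \<noteq> w" using e irr by auto
    moreover have "insert u (N u) \<in> P" "u \<in> insert u (N u)" "w \<in> insert u (N u)"
      using u w e by (auto simp: P_def N_def)
    ultimately show "u \<noteq> w \<and> (\<exists>B\<in>P. u \<in> B \<and> w \<in> B)" by blast
  next
    fix u w assume u: "u \<in> V" and w: "w \<in> V" and h: "u \<noteq> w \<and> (\<exists>B\<in>P. u \<in> B \<and> w \<in> B)"
    then obtain v where v: "v \<in> V" "u \<in> insert v (N v)" "w \<in> insert v (N v)" by (auto simp: P_def)
    have "insert u (N u) = insert v (N v)" by (rule closedN[OF cl v(1) v(2)])
    then have "w \<in> N u" using v(3) h by auto
    then show "E u w" by (simp add: N_def)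
  qed
  have "partition_on V P" using un dj ne by (simp add: partition_on_def)
  then show "disjoint_union_of_cliques V E d" unfolding disjoint_union_of_cliques_def
    using cardB adj by blast
next
  assume "disjoint_union_of_cliques V E d"
  then obtain P where pP: "partition_on V P" and adj: "\<forall>u\<in>V. \<forall>w\<in>V. E u w \<longleftrightarrow> (u \<noteq> w \<and> (\<exists>B\<in>P. u \<in> B \<and> w \<in> B))"
    unfolding disjoint_union_of_cliques_def by metis
  have dj: "disjoint P" using pP by (simp add: partition_on_def)
  show cliqueN unfolding cliqueN_def
  proof (intro ballI impI)
    fix v a b assume v: "v \<in> V" and a: "a \<in> N v" and b: "b \<in> N v" and ab: "a \<noteq> b"
    have aV: "a \<in> V" "b \<in> V" using a b N_sub by auto
    have "E v a" "E v b" using a b by (auto simp: N_def)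
    have "\<exists>A\<in>P. v \<in> A \<and> a \<in> A" using adj[rule_format, OF v aV(1)] \<open>E v a\<close> by simp
    then obtain A where A: "A \<in> P" "v \<in> A" "a \<in> A" by blast
    have "\<exists>B\<in>P. v \<in> B \<and> b \<in> B" using adj[rule_format, OF v aV(2)] \<open>E v b\<close> by simp
    then obtain B where B: "B \<in> P" "v \<in> B" "b \<in> B" by blast
    have "A \<inter> B \<noteq> {}" using A B by auto
    then have "A = B"
    proof (rule contrapos_np)
      assume "A \<noteq> B"
      then show "A \<inter> B = {}" using dj[unfolded disjoint_def, rule_format, OF A(1) B(1)] by simp
    qed
    then have "a \<noteq> b \<and> (\<exists>B\<in>P. a \<in> B \<and> b \<in> B)" using ab A B by blast
    then show "E a b" using adj aV by simp
  qed
qed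

end

lemma K_wrg: assumes "lam > 0" shows "wrg (K_verts d) (K_edges d) d lam"
proof
  show "simple_graph (K_verts d) (K_edges d)"
    by (auto simp: simple_graph_def K_verts_def K_edges_def)
  show "regular (K_verts d) (K_edges d) d" unfolding regular_def
  proof
    fix v assume v: "v \<in> K_verts d"
    have "{u \<in> K_verts d. K_edges d v u} = {..d} - {v}" using v by (auto simp: K_verts_def K_edges_def)
    then show "card {u \<in> K_verts d. K_edges d v u} = d" using v by (simp add: K_verts_def)
  qed
  show "lam > 0" by (rule assms)
qed

theorem theorem1:
  fixes V :: "'a set" and E :: "'a \<Rightarrow> 'a \<Rightarrow> bool" and d :: nat and lam :: real
  assumes "simple_graph V E" and "regular V E d" and "lam > 0"
  shows "WR_occupancy V E lam \<le> WR_occupancy (K_verts d) (K_edges d) lam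
    \<and> (WR_occupancy V E lam = WR_occupancy (K_verts d) (K_edges d) lam
         \<longleftrightarrow> disjoint_union_of_cliques V E d)"
proof -
  interpret G: wrg V E d lam using assms by unfold_locales
  interpret K: wrg "K_verts d" "K_edges d" d lam by (rule K_wrg[OF assms(3)])
  have Kcl: K.cliqueN unfolding K.cliqueN_def K.N_def by (auto simp: K_verts_def K_edges_def)
  have KG: "K.Gsum = 0" using K.Gsum_zero_iff Kcl by simp
  have same: "K.cc = G.cc" "K.Zk = G.Zk"
    by (simp_all add: K.cc_def G.cc_def K.Zk_def G.Zk_def K.ee_def G.ee_def)
  have aK: "WR_occupancy (K_verts d) (K_edges d) lam = 2*lam*G.cc/G.Zk"
    using K.master KG same by simp
  have D: "G.Zk * G.Z * card V > 0"
    using G.Zk_pos G.Z_pos G.finV G.Vne by (simp add: card_gt_0_iff)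
  have aG: "WR_occupancy V E lam = 2*lam*G.cc/G.Zk - G.Gsum/(G.Zk * G.Z * card V)" by (rule G.master)
  have "G.Gsum/(G.Zk * G.Z * card V) \<ge> 0" using G.Gsum_nonneg D by simp
  moreover have "G.Gsum/(G.Zk * G.Z * card V) = 0 \<longleftrightarrow> G.Gsum = 0"
    using D by (metis divide_eq_0_iff less_irrefl)
  ultimately show ?thesis using aG aK G.Gsum_zero_iff G.cliqueN_iff by auto
qed


end
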